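(* Let $n\in\mathbb N$, let $K_1,\dots,K_n$ be singular kernel functions and let $J$ be an arbitrary $n$-field function. Then for each $j\in\{0,1,\dots,n\}$ the function $m_j:\overline S\to[-\infty,\infty)$ is continuous in the extended sense. That is, at points $\mathbf y$ with $m_j(\mathbf y)=-\infty$ one has $m_j(\mathbf x)\to-\infty$ as $\mathbf x\to\mathbf y$.
   Context: A kernel function is a function $K:(-1,0)\cup(0,1)\to\mathbb R$ that is concave on $(-1,0)$ and concave on $(0,1)$ and satisfies $\lim_{t\downarrow0}K(t)=\lim_{t\uparrow0}K(t)$. It is extended to $[-1,1]$ with values in $[-\infty,\infty)$ by its one-sided limits at $-1,0,1$. A kernel function is singular if $K(0)=-\infty$. An $n$-field function is a function $J:[0,1]\to[-\infty,\infty)$ that is bounded above and whose set of finite values has total weight strictly greater than $n$. Here the points $0$ and $1$ each have weight $1/2$ and every point of $(0,1)$ has weight $1$. No continuity of $J$ is assumed. $\overline S=\{\mathbf y\in\mathbb R^n:0\le y_1\le\dots\le y_n\le1\}$. $F(\mathbf y,t)=J(t)+\sum_{i=1}^nK_i(t-y_i)$, with the convention $a+(-\infty)=-\infty$. Set $y_0:=0$ and $y_{n+1}:=1$. For $j=0,\dots,n$ let $I_j(\mathbf y)=[y_j,y_{j+1}]$ and $m_j(\mathbf y)=\sup_{t\in I_j(\mathbf y)}F(\mathbf y,t)$. *)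

theory Defs
  imports "HOL-Analysis.Analysis" "HOL-Library.Extended_Real"
begin

text \<open>Values live in ereal; only [-\<infinity>,\<infinity>) occurs.\<close>
definition kernel_function :: "(real \<Rightarrow> ereal) \<Rightarrow> bool" where
  "kernel_function K \<longleftrightarrow>
     (\<forall>t \<in> {-1<..<0} \<union> {0<..<1}. \<bar>K t\<bar> \<noteq> \<infinity>) \<and>
     concave_on {-1<..<0} (\<lambda>t. real_of_ereal (K t)) \<and>
     concave_on {0<..<1} (\<lambda>t. real_of_ereal (K t)) \<and>
     (K \<longlongrightarrow> K 0) (at_left 0) \<and> (K \<longlongrightarrow> K 0) (at_right 0) \<and>
     (K \<longlongrightarrow> K (-1)) (at_right (-1)) \<and> (K \<longlongrightarrow> K 1) (at_left 1)"

definition singular_kernel :: "(real \<Rightarrow> ereal) \<Rightarrow> bool" where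
  "singular_kernel K \<longleftrightarrow> kernel_function K \<and> K 0 = -\<infinity>"

definition field_weight :: "real set \<Rightarrow> ereal" where
  "field_weight A =
     (if finite (A \<inter> {0<..<1})
      then ereal (real (card (A \<inter> {0<..<1})) + (if 0 \<in> A then 1/2 else 0)
                  + (if 1 \<in> A then 1/2 else 0))
      else \<infinity>)"

definition n_field_function :: "nat \<Rightarrow> (real \<Rightarrow> ereal) \<Rightarrow> bool" where
  "n_field_function n J \<longleftrightarrow>
     (\<exists>M::real. \<forall>t\<in>{0..1}. J t \<le> ereal M) \<and>
     field_weight {t \<in> {0..1}. J t \<noteq> -\<infinity>} > ereal (real n)"

text \<open>Points y = (y_1,...,y_n) are functions nat \<Rightarrow> real vanishing outside {1..n};
  on this set the product topology coincides with the Euclidean topology of R^n.\<close>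
definition Sbar :: "nat \<Rightarrow> (nat \<Rightarrow> real) set" where
  "Sbar n = {y. (\<forall>i. (i = 0 \<or> n < i) \<longrightarrow> y i = 0) \<and>
                (\<forall>i\<in>{1..n}. 0 \<le> y i \<and> y i \<le> 1) \<and>
                (\<forall>i\<in>{1..<n}. y i \<le> y (Suc i))}"

definition Ffun :: "(real \<Rightarrow> ereal) \<Rightarrow> (nat \<Rightarrow> real \<Rightarrow> ereal) \<Rightarrow> nat \<Rightarrow> (nat \<Rightarrow> real) \<Rightarrow> real \<Rightarrow> ereal" where
  "Ffun J K n y t = J t + (\<Sum>i\<in>{1..n}. K i (t - y i))"

definition ypt :: "nat \<Rightarrow> (nat \<Rightarrow> real) \<Rightarrow> nat \<Rightarrow> real" where
  "ypt n y j = (if j = 0 then 0 else if j = Suc n then 1 else y j)"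

definition mfun :: "(real \<Rightarrow> ereal) \<Rightarrow> (nat \<Rightarrow> real \<Rightarrow> ereal) \<Rightarrow> nat \<Rightarrow> nat \<Rightarrow> (nat \<Rightarrow> real) \<Rightarrow> ereal" where
  "mfun J K n j y = (SUP t \<in> {ypt n y j .. ypt n y (Suc j)}. Ffun J K n y t)"

end

theory Submission
  imports Defs
begin

lemma aux_scale: "0 \<le> (l::real) \<Longrightarrow> l \<le> 1 \<Longrightarrow> l * x \<ge> - \<bar>x\<bar>"
proof -
  assume l: "0 \<le> l" "l \<le> 1"
  have "\<bar>l * x\<bar> = l * \<bar>x\<bar>" using l by (simp add: abs_mult)
  also have "\<dots> \<le> \<bar>x\<bar>" using l by (intro mult_left_le_one_le) auto
  finally show ?thesis by linarith
qed

lemma kernel_ub_left: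
  assumes "kernel_function K"
  shows "\<exists>B. \<forall>u\<in>{-1<..<-1/2}. K u \<le> ereal B"
proof -
  let ?f = "\<lambda>t. real_of_ereal (K t)"
  have cc: "concave_on {-1<..<0} ?f" and fin: "\<forall>t \<in> {-1<..<0} \<union> {0<..<1}. \<bar>K t\<bar> \<noteq> \<infinity>"
    using assms unfolding kernel_function_def by auto
  define B where "B = 3 * (\<bar>?f (-1/2)\<bar> + \<bar>?f (-1/4)\<bar>)"
  have "K u \<le> ereal B" if u: "u \<in> {-1<..<-1/2}" for u
  proof -
    define l where "l = 1 / (-4*u - 1)"
    have l: "0 < l" "l < 1" "l > 1/3" using u by (auto simp: l_def field_simps)
    have d: "-4*u - 1 > 0" using u by auto
    have h1: "l * (-4*u - 1) = 1" using d unfolding l_def by simp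
    have eq: "l * u + (1 - l) * (-1/4) = -1/2" using h1 by (simp add: algebra_simps)
    have "?f ((1 - l) *\<^sub>R (-1/4) + l *\<^sub>R u) \<ge> (1 - l) * ?f (-1/4) + l * ?f u"
      using u l by (intro concave_onD[OF cc]) auto
    moreover have "(1 - l) *\<^sub>R (-1/4) + l *\<^sub>R u = l * u + (1 - l) * (-1/4)" by simp
    ultimately have h: "?f (-1/2) \<ge> l * ?f u + (1 - l) * ?f (-1/4)" using eq by simp
    have "l * ?f u \<le> \<bar>?f (-1/2)\<bar> + \<bar>?f (-1/4)\<bar>"
    proof -
      have "(1 - l) * ?f (-1/4) \<ge> - \<bar>?f (-1/4)\<bar>"
        using l by (intro aux_scale) auto
      thus ?thesis using h by linarith
    qed
    hence "?f u \<le> (\<bar>?f (-1/2)\<bar> + \<bar>?f (-1/4)\<bar>) / l" using l by (simp add: field_simps)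
    also have "\<dots> \<le> B"
    proof -
      define C where "C = \<bar>?f (-1/2)\<bar> + \<bar>?f (-1/4)\<bar>"
      have C0: "C \<ge> 0" unfolding C_def by (intro add_nonneg_nonneg abs_ge_zero)
      have "C * 1 \<le> C * (3 * l)" using C0 l by (intro mult_left_mono) auto
      hence "C / l \<le> 3 * C" using l by (simp add: pos_divide_le_eq algebra_simps)
      thus ?thesis unfolding B_def C_def by simp
    qed
    finally have "?f u \<le> B" .
    moreover have "\<bar>K u\<bar> \<noteq> \<infinity>" using fin u by auto
    ultimately show ?thesis by (cases "K u") auto
  qed
  thus ?thesis by blast
qed


lemma kernel_ub_right:
  assumes "kernel_function K"
  shows "\<exists>B. \<forall>u\<in>{1/2<..<1}. K u \<le> ereal B"
proof -
  let ?f = "\<lambda>t. real_of_ereal (K t)"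
  have cc: "concave_on {0<..<1} ?f" and fin: "\<forall>t \<in> {-1<..<0} \<union> {0<..<1}. \<bar>K t\<bar> \<noteq> \<infinity>"
    using assms unfolding kernel_function_def by auto
  define B where "B = 3 * (\<bar>?f (1/2)\<bar> + \<bar>?f (1/4)\<bar>)"
  have "K u \<le> ereal B" if u: "u \<in> {1/2<..<1}" for u
  proof -
    define l where "l = 1 / (4*u - 1)"
    have l: "0 < l" "l < 1" "l > 1/3" using u by (auto simp: l_def field_simps)
    have d: "4*u - 1 > 0" using u by auto
    have h1: "l * (4*u - 1) = 1" using d unfolding l_def by simp
    have h2: "4*(l*u) = 1 + l" using h1 by (simp add: algebra_simps)
    have eq: "l * u + (1 - l) * (1/4) = 1/2" using h2 by (simp add: field_simps)
    have calc: "?f ((1 - l) *\<^sub>R (1/4) + l *\<^sub>R u) \<ge> (1 - l) * ?f (1/4) + l * ?f u"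
      using u l by (intro concave_onD[OF cc]) auto
    have eq2: "(1 - l) *\<^sub>R (1/4) + l *\<^sub>R u = (1/2::real)" using eq by (simp add: algebra_simps)
    have h: "?f (1/2) \<ge> l * ?f u + (1 - l) * ?f (1/4)" using calc unfolding eq2 by linarith
    have "l * ?f u \<le> \<bar>?f (1/2)\<bar> + \<bar>?f (1/4)\<bar>"
    proof -
      have "(1 - l) * ?f (1/4) \<ge> - \<bar>?f (1/4)\<bar>"
        using l by (intro aux_scale) auto
      thus ?thesis using h by linarith
    qed
    hence "?f u \<le> (\<bar>?f (1/2)\<bar> + \<bar>?f (1/4)\<bar>) / l" using l by (simp add: field_simps)
    also have "\<dots> \<le> B"
    proof -
      define C where "C = \<bar>?f (1/2)\<bar> + \<bar>?f (1/4)\<bar>"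
      have C0: "C \<ge> 0" unfolding C_def by (intro add_nonneg_nonneg abs_ge_zero)
      have "C * 1 \<le> C * (3 * l)" using C0 l by (intro mult_left_mono) auto
      hence "C / l \<le> 3 * C" using l by (simp add: pos_divide_le_eq algebra_simps)
      thus ?thesis unfolding B_def C_def by simp
    qed
    finally have "?f u \<le> B" .
    moreover have "\<bar>K u\<bar> \<noteq> \<infinity>" using fin u by auto
    ultimately show ?thesis by (cases "K u") auto
  qed
  thus ?thesis by blast
qed



lemma kernel_fin:
  assumes "singular_kernel K" "u \<in> {-1..1}"
  shows "K u \<noteq> \<infinity>"
proof -
  have kf: "kernel_function K" and K0: "K 0 = -\<infinity>" using assms(1) by (auto simp: singular_kernel_def)
  have fin: "\<forall>t \<in> {-1<..<0} \<union> {0<..<1}. \<bar>K t\<bar> \<noteq> \<infinity>"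
    and lm1: "(K \<longlongrightarrow> K (-1)) (at_right (-1))" and l1: "(K \<longlongrightarrow> K 1) (at_left 1)"
    using kf unfolding kernel_function_def by auto
  consider "u = -1" | "u = 1" | "u = 0" | "u \<in> {-1<..<0} \<union> {0<..<1}" using assms(2) by force
  thus ?thesis
  proof cases
    case 1
    obtain B where B: "\<forall>u\<in>{-1<..<-1/2}. K u \<le> ereal B" using kernel_ub_left[OF kf] by blast
    have "eventually (\<lambda>t. K t \<le> ereal B) (at_right (-1::real))"
      unfolding eventually_at_right_field using B by (intro exI[of _ "-1/2"]) auto
    hence "K (-1) \<le> ereal B" using lm1 by (intro tendsto_upperbound) auto
    thus ?thesis using 1 by auto
  next
    case 2
    obtain B where B: "\<forall>u\<in>{1/2<..<1}. K u \<le> ereal B" using kernel_ub_right[OF kf] by blast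
    have "eventually (\<lambda>t. K t \<le> ereal B) (at_left (1::real))"
      unfolding eventually_at_left_field using B by (intro exI[of _ "1/2"]) auto
    hence "K 1 \<le> ereal B" using l1 by (intro tendsto_upperbound) auto
    thus ?thesis using 2 by auto
  next
    case 3 thus ?thesis using K0 by simp
  next
    case 4 hence "\<bar>K u\<bar> \<noteq> \<infinity>" by (rule bspec[OF fin])
    thus ?thesis by auto
  qed
qed

lemma kernel_cont_open:
  assumes "kernel_function K" "open S" "S = {-1<..<0} \<or> S = {0<..<1}"
  shows "continuous_on S K"
proof -
  let ?f = "\<lambda>t. real_of_ereal (K t)"
  have fin: "\<forall>t \<in> {-1<..<0} \<union> {0<..<1}. \<bar>K t\<bar> \<noteq> \<infinity>"
    using assms(1) unfolding kernel_function_def by auto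
  have cc: "concave_on {-1<..<0} ?f" "concave_on {0<..<1} ?f"
    using assms(1) unfolding kernel_function_def by auto
  have "concave_on S ?f" using assms(3)
  proof (elim disjE)
    assume "S = {-1<..<0}" thus ?thesis using cc(1) by (simp only:)
  next
    assume "S = {0<..<1}" thus ?thesis using cc(2) by (simp only:)
  qed
  hence "convex_on S (\<lambda>t. - ?f t)" by (simp only: concave_on_def)
  hence "continuous_on S (\<lambda>t. - ?f t)" using assms(2) by (intro convex_on_continuous)
  hence c1: "continuous_on S (\<lambda>t. - (- ?f t))" by (rule continuous_on_minus)
  have "(\<lambda>t. - (- ?f t)) = ?f" by (rule ext) (rule minus_minus)
  hence "continuous_on S ?f" using c1 by (simp only:)
  hence c2: "continuous_on S (\<lambda>t. ereal (?f t))" by (rule continuous_on_ereal)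
  have eq: "ereal (?f t) = K t" if t: "t \<in> S" for t
  proof -
    have "t \<in> {-1<..<0} \<union> {0<..<1}" using assms(3) t by blast
    hence "\<bar>K t\<bar> \<noteq> \<infinity>" by (rule bspec[OF fin])
    thus ?thesis by (cases "K t") simp_all
  qed
  have "continuous_on S K = continuous_on S (\<lambda>t. ereal (?f t))"
    by (rule continuous_on_cong[OF refl]) (rule eq[symmetric])
  thus ?thesis using c2 by (simp only:)
qed

lemma kernel_cont:
  assumes "kernel_function K"
  shows "continuous_on {-1..1} K"
  unfolding continuous_on_eq_continuous_within
proof
  fix u :: real assume u: "u \<in> {-1..1}"
  have lm1: "(K \<longlongrightarrow> K (-1)) (at_right (-1))" and l1: "(K \<longlongrightarrow> K 1) (at_left 1)"
    and l0: "(K \<longlongrightarrow> K 0) (at_left 0)" and r0: "(K \<longlongrightarrow> K 0) (at_right 0)"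
    using assms unfolding kernel_function_def by auto
  consider "u = -1" | "u = 1" | "u = 0" | "u \<in> {-1<..<0}" | "u \<in> {0<..<1}" using u by force
  thus "continuous (at u within {-1..1}) K"
  proof cases
    case 1 thus ?thesis using lm1 by (simp add: continuous_within at_within_Icc_at_right)
  next
    case 2 thus ?thesis using l1 by (simp add: continuous_within at_within_Icc_at_left)
  next
    case 3
    have "(K \<longlongrightarrow> K 0) (at 0)" using l0 r0 by (rule filterlim_split_at)
    thus ?thesis using 3 unfolding continuous_within by (auto intro: tendsto_within_subset)
  next
    case 4
    have "continuous_on {-1<..<0} K" using assms by (intro kernel_cont_open) auto
    hence "continuous (at u) K" using 4 by (simp add: continuous_on_eq_continuous_at)
    thus ?thesis by (rule continuous_at_imp_continuous_within)
  next
    case 5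
    have "continuous_on {0<..<1} K" using assms by (intro kernel_cont_open) auto
    hence "continuous (at u) K" using 5 by (simp add: continuous_on_eq_continuous_at)
    thus ?thesis by (rule continuous_at_imp_continuous_within)
  qed
qed


lemma continuous_on_sum_ereal:
  fixes f :: "'i \<Rightarrow> 'a::topological_space \<Rightarrow> ereal"
  assumes "finite A" "\<forall>i\<in>A. continuous_on S (f i)" "\<forall>i\<in>A. \<forall>x\<in>S. f i x \<noteq> \<infinity>"
  shows "continuous_on S (\<lambda>x. \<Sum>i\<in>A. f i x)"
  using assms
proof (induction A rule: finite_induct)
  case empty thus ?case by simp
next
  case (insert a A)
  have c1: "continuous_on S (f a)" and c2: "continuous_on S (\<lambda>x. \<Sum>i\<in>A. f i x)"
    using insert by auto
  show ?case unfolding continuous_on_def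
  proof
    fix x assume x: "x \<in> S"
    have "f a x \<noteq> \<infinity>" using insert x by auto
    moreover have "(\<Sum>i\<in>A. f i x) \<noteq> \<infinity>" using insert x by (auto simp: sum_Pinfty)
    ultimately have "((\<lambda>y. f a y + (\<Sum>i\<in>A. f i y)) \<longlongrightarrow> f a x + (\<Sum>i\<in>A. f i x)) (at x within S)"
      using c1 c2 x by (intro tendsto_add_ereal_general) (auto simp: continuous_on_def)
    thus "((\<lambda>x. \<Sum>i\<in>insert a A. f i x) \<longlongrightarrow> (\<Sum>i\<in>insert a A. f i x)) (at x within S)"
      using insert by simp
  qed
qed

lemma sum_ereal_Minfty:
  fixes f :: "'i \<Rightarrow> ereal"
  assumes "finite A" "i \<in> A" "f i = -\<infinity>" "\<forall>j\<in>A. f j \<noteq> \<infinity>"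
  shows "sum f A = -\<infinity>"
proof -
  have "sum f A = f i + sum f (A - {i})" using assms by (simp add: sum.remove)
  moreover have "sum f (A - {i}) \<noteq> \<infinity>" using assms by (auto simp: sum_Pinfty)
  ultimately show ?thesis using assms(3) by simp
qed

definition Gsum :: "(nat \<Rightarrow> real \<Rightarrow> ereal) \<Rightarrow> nat \<Rightarrow> (nat \<Rightarrow> real) \<Rightarrow> real \<Rightarrow> ereal" where
  "Gsum K n x s = (\<Sum>i\<in>{1..n}. K i (s - x i))"

lemma Ffun_Gsum: "Ffun J K n x s = J s + Gsum K n x s"
  by (simp add: Ffun_def Gsum_def)

lemma Sbar_range: "x \<in> Sbar n \<Longrightarrow> i \<in> {1..n} \<Longrightarrow> 0 \<le> x i \<and> x i \<le> 1"
  by (auto simp: Sbar_def)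

lemma Gsum_fin:
  assumes "\<forall>i\<in>{1..n}. singular_kernel (K i)" "x \<in> Sbar n" "s \<in> {0..1}"
  shows "\<forall>i\<in>{1..n}. K i (s - x i) \<noteq> \<infinity>" "Gsum K n x s \<noteq> \<infinity>"
proof -
  show *: "\<forall>i\<in>{1..n}. K i (s - x i) \<noteq> \<infinity>"
  proof
    fix i assume i: "i \<in> {1..n}"
    have "s - x i \<in> {-1..1}" using Sbar_range[OF assms(2) i] assms(3) by auto
    thus "K i (s - x i) \<noteq> \<infinity>" using assms(1) i kernel_fin by blast
  qed
  thus "Gsum K n x s \<noteq> \<infinity>" unfolding Gsum_def by (auto simp: sum_Pinfty)
qed

lemma G_cont:
  assumes "\<forall>i\<in>{1..n}. singular_kernel (K i)"
  shows "continuous_on (Sbar n \<times> {0..1}) (\<lambda>p. Gsum K n (fst p) (snd p))"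
  unfolding Gsum_def
proof (rule continuous_on_sum_ereal)
  show "\<forall>i\<in>{1..n}. continuous_on (Sbar n \<times> {0..1}) (\<lambda>p. K i (snd p - fst p i))"
  proof
    fix i assume i: "i \<in> {1..n}"
    have kc: "continuous_on {-1..1} (K i)" using assms i by (intro kernel_cont) (auto simp: singular_kernel_def)
    have c: "continuous_on (Sbar n \<times> {0..1}) (\<lambda>p. snd p - fst p i)"
      by (intro continuous_on_diff continuous_on_snd
          continuous_on_compose2[OF continuous_on_product_coordinates continuous_on_fst]) auto
    have im: "(\<lambda>p. snd p - fst p i) ` (Sbar n \<times> {0..1}) \<subseteq> {-1..1}"
      using Sbar_range[OF _ i] by force
    show "continuous_on (Sbar n \<times> {0..1}) (\<lambda>p. K i (snd p - fst p i))"
      by (rule continuous_on_compose2[OF kc c im])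
  qed
  show "\<forall>i\<in>{1..n}. \<forall>x\<in>Sbar n \<times> {0..1}. K i (snd x - fst x i) \<noteq> \<infinity>"
    using Gsum_fin(1)[OF assms] by fastforce
qed simp


lemma G_sing:
  assumes "\<forall>i\<in>{1..n}. singular_kernel (K i)" "y \<in> Sbar n" "t \<in> {0..1}" "i \<in> {1..n}" "t = y i"
  shows "Gsum K n y t = -\<infinity>"
  unfolding Gsum_def
proof (rule sum_ereal_Minfty[of _ i])
  show "K i (t - y i) = -\<infinity>" using assms(1,4,5) by (simp add: singular_kernel_def)
  show "\<forall>j\<in>{1..n}. K j (t - y j) \<noteq> \<infinity>" using Gsum_fin(1)[OF assms(1-3)] .
qed (use assms in auto)

lemma ypt_range: "x \<in> Sbar n \<Longrightarrow> k \<le> Suc n \<Longrightarrow> ypt n x k \<in> {0..1}"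
  using Sbar_range[of x n k] by (auto simp: ypt_def)

lemma coord_tendsto: "((\<lambda>x::nat\<Rightarrow>real. x i) \<longlongrightarrow> y i) (at y within T)"
proof -
  have "isCont (\<lambda>x::nat\<Rightarrow>real. x i) y"
    using continuous_on_eq_continuous_at[OF open_UNIV, of "\<lambda>x::nat\<Rightarrow>real. x i"]
      continuous_on_product_coordinates[of i] by blast
  hence "continuous (at y within T) (\<lambda>x::nat\<Rightarrow>real. x i)" by (rule continuous_at_imp_continuous_within)
  thus ?thesis by (simp add: continuous_within)
qed

lemma ypt_tendsto: "((\<lambda>x. ypt n x k) \<longlongrightarrow> ypt n y k) (at y within T)"
  by (cases "k = 0"; cases "k = Suc n") (auto simp: ypt_def coord_tendsto)

lemma interior_pos:
  assumes K: "\<forall>i\<in>{1..n}. singular_kernel (K i)" and y: "y \<in> Sbar n" and j: "j \<le> n"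
    and t: "t \<in> {ypt n y j .. ypt n y (Suc j)}" and G: "Gsum K n y t \<noteq> -\<infinity>"
  shows "(j = 0 \<or> ypt n y j < t) \<and> (j = n \<or> t < ypt n y (Suc j))"
proof -
  have t01: "t \<in> {0..1}" using t ypt_range[OF y, of j] ypt_range[OF y, of "Suc j"] j by auto
  have "j = 0 \<or> ypt n y j < t"
  proof (rule ccontr)
    assume "\<not> ?thesis"
    hence "j \<noteq> 0" "t = y j" using t j by (auto simp: ypt_def)
    hence "Gsum K n y t = -\<infinity>" using G_sing[OF K y t01, of j] j by auto
    thus False using G by simp
  qed
  moreover have "j = n \<or> t < ypt n y (Suc j)"
  proof (rule ccontr)
    assume "\<not> ?thesis"
    hence "j \<noteq> n" "t = y (Suc j)" using t j by (auto simp: ypt_def)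
    hence "Gsum K n y t = -\<infinity>" using G_sing[OF K y t01, of "Suc j"] j by auto
    thus False using G by simp
  qed
  ultimately show ?thesis by blast
qed

lemma G_cont_t:
  assumes K: "\<forall>i\<in>{1..n}. singular_kernel (K i)" and t: "t \<in> {0..1}"
  shows "continuous_on (Sbar n) (\<lambda>x. Gsum K n x t)"
proof -
  have "continuous_on (Sbar n) (\<lambda>x. (\<lambda>p. Gsum K n (fst p) (snd p)) (x, t))"
    by (rule continuous_on_compose2[OF G_cont[OF K]])
       (use t in \<open>auto intro: continuous_intros\<close>)
  thus ?thesis by simp
qed


lemma J_bound: "n_field_function n J \<Longrightarrow> \<exists>M. \<forall>t\<in>{0..1}. J t \<le> ereal M"
  by (auto simp: n_field_function_def)

lemma ev_in_I:
  assumes K: "\<forall>i\<in>{1..n}. singular_kernel (K i)" and y: "y \<in> Sbar n" and j: "j \<le> n"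
    and t: "t \<in> {ypt n y j .. ypt n y (Suc j)}" and G: "Gsum K n y t \<noteq> -\<infinity>"
  shows "eventually (\<lambda>x. t \<in> {ypt n x j .. ypt n x (Suc j)}) (at y within Sbar n)"
proof -
  have t01: "t \<in> {0..1}" using t ypt_range[OF y, of j] ypt_range[OF y, of "Suc j"] j by auto
  have ip: "(j = 0 \<or> ypt n y j < t) \<and> (j = n \<or> t < ypt n y (Suc j))"
    by (rule interior_pos[OF K y j t G])
  have e1: "eventually (\<lambda>x. ypt n x j \<le> t) (at y within Sbar n)"
  proof (cases "j = 0")
    case True thus ?thesis using t01 by (simp add: ypt_def)
  next
    case False
    hence "ypt n y j < t" using ip by auto
    from order_tendstoD(2)[OF ypt_tendsto this] show ?thesis by (rule eventually_mono) simp
  qed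
  have e2: "eventually (\<lambda>x. t \<le> ypt n x (Suc j)) (at y within Sbar n)"
  proof (cases "j = n")
    case True thus ?thesis using t01 by (simp add: ypt_def)
  next
    case False
    hence "t < ypt n y (Suc j)" using ip by auto
    from order_tendstoD(1)[OF ypt_tendsto this] show ?thesis by (rule eventually_mono) simp
  qed
  from e1 e2 show ?thesis by eventually_elim auto
qed

lemma lower_ev:
  assumes K: "\<forall>i\<in>{1..n}. singular_kernel (K i)" and J: "n_field_function n J" and j: "j \<le> n"
    and y: "y \<in> Sbar n" and c: "c < mfun J K n j y"
  shows "eventually (\<lambda>x. c < mfun J K n j x) (at y within Sbar n)"
proof -
  obtain M where M: "\<forall>t\<in>{0..1}. J t \<le> ereal M" using J_bound[OF J] by blast
  obtain t where t: "t \<in> {ypt n y j .. ypt n y (Suc j)}" and ct: "c < Ffun J K n y t"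
    using c unfolding mfun_def by (auto simp: less_SUP_iff)
  have t01: "t \<in> {0..1}" using t ypt_range[OF y, of j] ypt_range[OF y, of "Suc j"] j by auto
  obtain c' where c': "c < ereal c'" "ereal c' < Ffun J K n y t" using ereal_dense2[OF ct] by blast
  have Jn: "J t \<noteq> \<infinity>" using M t01 by force
  have Gn: "Gsum K n y t \<noteq> \<infinity>" using Gsum_fin(2)[OF K y t01] .
  have F: "Ffun J K n y t = J t + Gsum K n y t" by (rule Ffun_Gsum)
  have Jm: "J t \<noteq> -\<infinity>" using c'(2) F Gn by (cases "Gsum K n y t") auto
  have Gm: "Gsum K n y t \<noteq> -\<infinity>" using c'(2) F Jn by (cases "J t") auto
  obtain r where r: "J t = ereal r" using Jn Jm by (cases "J t") auto
  obtain g where g: "Gsum K n y t = ereal g" using Gn Gm by (cases "Gsum K n y t") auto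
  have "c' < r + g" using c'(2) F r g by simp
  hence "ereal (c' - r) < Gsum K n y t" using g by simp
  moreover have "((\<lambda>x. Gsum K n x t) \<longlongrightarrow> Gsum K n y t) (at y within Sbar n)"
    using G_cont_t[OF K t01] y by (simp add: continuous_on_def)
  ultimately have e1: "eventually (\<lambda>x. ereal (c' - r) < Gsum K n x t) (at y within Sbar n)"
    by (rule order_tendstoD(1)[rotated])
  have e2: "eventually (\<lambda>x. t \<in> {ypt n x j .. ypt n x (Suc j)}) (at y within Sbar n)"
    by (rule ev_in_I[OF K y j t Gm])
  from e1 e2 show ?thesis
  proof eventually_elim
    case (elim x)
    have "ereal c' < ereal r + Gsum K n x t" using elim(1)
      by (cases "Gsum K n x t") auto
    also have "\<dots> = Ffun J K n x t" using r by (simp add: Ffun_Gsum)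
    also have "\<dots> \<le> mfun J K n j x" unfolding mfun_def using elim(2) by (rule SUP_upper)
    finally show ?case using c'(1) by simp
  qed
qed


lemma open_nbhd_ev:
  assumes "open U" "y \<in> U"
  shows "eventually (\<lambda>x. x \<in> U) (at y within T)"
  unfolding eventually_at_topological using assms by blast

lemma G_open_pre:
  assumes K: "\<forall>i\<in>{1..n}. singular_kernel (K i)" and B: "open B"
    and y: "y \<in> Sbar n" and t: "t \<in> {0..1}" and Gy: "Gsum K n y t \<in> B"
  obtains U0 V where "open U0" "open V" "y \<in> U0" "t \<in> V"
    "\<And>x s. x \<in> U0 \<Longrightarrow> x \<in> Sbar n \<Longrightarrow> s \<in> V \<Longrightarrow> s \<in> {0..1} \<Longrightarrow> Gsum K n x s \<in> B"
proof -
  let ?D = "Sbar n \<times> {0..1::real}" and ?G = "\<lambda>p. Gsum K n (fst p) (snd p)"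
  obtain A where A: "open A" "A \<inter> ?D = ?G -` B \<inter> ?D"
    using G_cont[OF K] B unfolding continuous_on_open_invariant by blast
  have "(y, t) \<in> A" using A(2) y t Gy by auto
  then obtain U0 V where UV: "open U0" "open V" "(y, t) \<in> U0 \<times> V" "U0 \<times> V \<subseteq> A"
    using open_prod_elim[OF A(1)] by metis
  show ?thesis
  proof (rule that[OF UV(1,2)])
    show "y \<in> U0" "t \<in> V" using UV(3) by auto
    fix x s assume "x \<in> U0" "x \<in> Sbar n" "s \<in> V" "s \<in> {0..1::real}"
    hence "(x, s) \<in> A \<inter> ?D" using UV(4) by auto
    thus "Gsum K n x s \<in> B" using A(2) by auto
  qed
qed

lemma upper_local:
  assumes K: "\<forall>i\<in>{1..n}. singular_kernel (K i)" and j: "j \<le> n" and y: "y \<in> Sbar n"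
    and M: "\<forall>t\<in>{0..1}. J t \<le> ereal M" and mb0: "mfun J K n j y \<le> ereal b0" and bb: "b0 < b"
    and t01: "t \<in> {0..1}"
  shows "\<exists>U. open U \<and> t \<in> U \<and> eventually (\<lambda>x. x \<in> Sbar n \<longrightarrow>
           (\<forall>s\<in>U. s \<in> {ypt n x j .. ypt n x (Suc j)} \<longrightarrow> Ffun J K n x s \<le> ereal b)) (at y within Sbar n)"
proof -
  have Irange: "s \<in> {0..1}" if "x \<in> Sbar n" "s \<in> {ypt n x j .. ypt n x (Suc j)}" for x s
    using that ypt_range[OF that(1), of j] ypt_range[OF that(1), of "Suc j"] j by auto
  consider "t < ypt n y j" | "t > ypt n y (Suc j)"
    | "t \<in> {ypt n y j .. ypt n y (Suc j)}" "Gsum K n y t < ereal (b - M)"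
    | "t \<in> {ypt n y j .. ypt n y (Suc j)}" "\<not> Gsum K n y t < ereal (b - M)" by force
  thus ?thesis
  proof cases
    case 1
    define m where "m = (t + ypt n y j) / 2"
    have "m < ypt n y j" using 1 by (simp add: m_def)
    from order_tendstoD(1)[OF ypt_tendsto this]
    have ev: "eventually (\<lambda>x. m < ypt n x j) (at y within Sbar n)" .
    show ?thesis
    proof (intro exI conjI)
      show "open {..<m}" by simp
      show "t \<in> {..<m}" using 1 by (simp add: m_def)
      show "eventually (\<lambda>x. x \<in> Sbar n \<longrightarrow> (\<forall>s\<in>{..<m}. s \<in> {ypt n x j .. ypt n x (Suc j)} \<longrightarrow>
              Ffun J K n x s \<le> ereal b)) (at y within Sbar n)"
        using ev by (rule eventually_mono) auto
    qed
  next
    case 2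
    define m where "m = (t + ypt n y (Suc j)) / 2"
    have "m > ypt n y (Suc j)" using 2 by (simp add: m_def)
    from order_tendstoD(2)[OF ypt_tendsto this]
    have ev: "eventually (\<lambda>x. ypt n x (Suc j) < m) (at y within Sbar n)" .
    show ?thesis
    proof (intro exI conjI)
      show "open {m<..}" by simp
      show "t \<in> {m<..}" using 2 by (simp add: m_def)
      show "eventually (\<lambda>x. x \<in> Sbar n \<longrightarrow> (\<forall>s\<in>{m<..}. s \<in> {ypt n x j .. ypt n x (Suc j)} \<longrightarrow>
              Ffun J K n x s \<le> ereal b)) (at y within Sbar n)"
        using ev by (rule eventually_mono) auto
    qed
  next
    case 3
    have Gy: "Gsum K n y t \<in> {..<ereal (b - M)}" using 3(2) by simp
    obtain U0 V where UV: "open U0" "open V" "y \<in> U0" "t \<in> V"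
      and G: "\<And>x s. x \<in> U0 \<Longrightarrow> x \<in> Sbar n \<Longrightarrow> s \<in> V \<Longrightarrow> s \<in> {0..1} \<Longrightarrow> Gsum K n x s \<in> {..<ereal (b - M)}"
    proof -
      show ?thesis by (rule G_open_pre[OF K open_lessThan y t01 Gy]) (rule that)
    qed
    show ?thesis
    proof (intro exI conjI)
      show "open V" "t \<in> V" by fact+
      show "eventually (\<lambda>x. x \<in> Sbar n \<longrightarrow> (\<forall>s\<in>V. s \<in> {ypt n x j .. ypt n x (Suc j)} \<longrightarrow>
              Ffun J K n x s \<le> ereal b)) (at y within Sbar n)"
        using open_nbhd_ev[OF UV(1,3)]
      proof (rule eventually_mono, intro impI ballI)
        fix x s assume x: "x \<in> U0" "x \<in> Sbar n" and s: "s \<in> V" "s \<in> {ypt n x j .. ypt n x (Suc j)}"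
        have s01: "s \<in> {0..1}" by (rule Irange[OF x(2) s(2)])
        have "Gsum K n x s \<le> ereal (b - M)" using G[OF x s(1) s01] by simp
        hence "J s + Gsum K n x s \<le> ereal M + ereal (b - M)" using M s01 by (intro add_mono) auto
        thus "Ffun J K n x s \<le> ereal b" by (simp add: Ffun_Gsum)
      qed
    qed
  next
    case 4
    have Gm: "Gsum K n y t \<noteq> -\<infinity>" using 4(2) by auto
    have Gn: "Gsum K n y t \<noteq> \<infinity>" using Gsum_fin(2)[OF K y t01] .
    obtain g where g: "Gsum K n y t = ereal g" using Gn Gm by (cases "Gsum K n y t") auto
    define e where "e = (b - b0) / 2"
    have e: "e > 0" using bb by (simp add: e_def)
    let ?B = "{ereal (g - e)<..<ereal (g + e)}"
    have Gy: "Gsum K n y t \<in> ?B" using g e by simp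
    obtain U0 V where UV: "open U0" "open V" "y \<in> U0" "t \<in> V"
      and G: "\<And>x s. x \<in> U0 \<Longrightarrow> x \<in> Sbar n \<Longrightarrow> s \<in> V \<Longrightarrow> s \<in> {0..1} \<Longrightarrow> Gsum K n x s \<in> ?B"
    proof -
      show ?thesis by (rule G_open_pre[OF K open_greaterThanLessThan y t01 Gy]) (rule that)
    qed
    have ip: "(j = 0 \<or> ypt n y j < t) \<and> (j = n \<or> t < ypt n y (Suc j))"
      by (rule interior_pos[OF K y j 4(1) Gm])
    define L where "L = (if j = 0 then UNIV else {ypt n y j<..})"
    define R where "R = (if j = n then UNIV else {..<ypt n y (Suc j)})"
    show ?thesis
    proof (intro exI conjI)
      have "open L" unfolding L_def by (cases "j = 0") simp_all
      moreover have "open R" unfolding R_def by (cases "j = n") simp_all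
      ultimately show "open (V \<inter> L \<inter> R)" using UV(2) by (intro open_Int)
      have "t \<in> L" using ip unfolding L_def by (cases "j = 0") simp_all
      moreover have "t \<in> R" using ip unfolding R_def by (cases "j = n") simp_all
      ultimately show "t \<in> V \<inter> L \<inter> R" using UV(4) by simp
      show "eventually (\<lambda>x. x \<in> Sbar n \<longrightarrow> (\<forall>s\<in>V \<inter> L \<inter> R. s \<in> {ypt n x j .. ypt n x (Suc j)} \<longrightarrow>
              Ffun J K n x s \<le> ereal b)) (at y within Sbar n)"
        using open_nbhd_ev[OF UV(1,3)]
      proof (rule eventually_mono, intro impI ballI)
        fix x s assume x: "x \<in> U0" "x \<in> Sbar n" and s: "s \<in> V \<inter> L \<inter> R" "s \<in> {ypt n x j .. ypt n x (Suc j)}"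
        have s01: "s \<in> {0..1}" by (rule Irange[OF x(2) s(2)])
        have sL: "s \<in> L" and sR: "s \<in> R" using s(1) by auto
        have s1: "ypt n y j \<le> s"
        proof (cases "j = 0")
          case True thus ?thesis using s01 by (simp add: ypt_def)
        next
          case False thus ?thesis using sL unfolding L_def by simp
        qed
        have s2: "s \<le> ypt n y (Suc j)"
        proof (cases "j = n")
          case True thus ?thesis using s01 by (simp add: ypt_def)
        next
          case False thus ?thesis using sR unfolding R_def by simp
        qed
        have sy: "s \<in> {ypt n y j .. ypt n y (Suc j)}" using s1 s2 by simp
        have Gx: "Gsum K n x s \<in> ?B" using G[OF x] s s01 by auto
        have Gy: "Gsum K n y s \<in> ?B" using G[OF UV(3) y] s s01 by auto
        obtain gx where gx: "Gsum K n x s = ereal gx" "gx < g + e" using Gx by (cases "Gsum K n x s") auto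
        obtain gy where gy: "Gsum K n y s = ereal gy" "g - e < gy" using Gy by (cases "Gsum K n y s") auto
        have "Ffun J K n y s \<le> mfun J K n j y" unfolding mfun_def using sy by (rule SUP_upper)
        hence Fy: "J s + ereal gy \<le> ereal b0" using mb0 gy by (simp add: Ffun_Gsum)
        have Jn: "J s \<noteq> \<infinity>" using M s01 by force
        show "Ffun J K n x s \<le> ereal b"
        proof (cases "J s")
          case (real r)
          have "r + gy \<le> b0" using Fy real by simp
          moreover have "b = b0 + 2 * e" unfolding e_def by (simp add: field_simps)
          ultimately have "r + gx \<le> b" using gx(2) gy(2) by linarith
          thus ?thesis using real gx by (simp add: Ffun_Gsum)
        next
          case PInf thus ?thesis using Jn by simp
        next
          case MInf thus ?thesis using gx by (simp add: Ffun_Gsum)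
        qed
      qed
    qed
  qed
qed


lemma upper_ev:
  assumes K: "\<forall>i\<in>{1..n}. singular_kernel (K i)" and J: "n_field_function n J" and j: "j \<le> n"
    and y: "y \<in> Sbar n" and c: "mfun J K n j y < c"
  shows "eventually (\<lambda>x. mfun J K n j x < c) (at y within Sbar n)"
proof -
  obtain M where M: "\<forall>t\<in>{0..1}. J t \<le> ereal M" using J_bound[OF J] by blast
  obtain b where b: "mfun J K n j y < ereal b" "ereal b < c" using ereal_dense2[OF c] by blast
  obtain b0 where b0: "mfun J K n j y < ereal b0" "ereal b0 < ereal b" using ereal_dense2[OF b(1)] by blast
  have bb: "b0 < b" using b0(2) by simp
  let ?P = "\<lambda>U x. x \<in> Sbar n \<longrightarrow>
           (\<forall>s\<in>U. s \<in> {ypt n x j .. ypt n x (Suc j)} \<longrightarrow> Ffun J K n x s \<le> ereal b)"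
  have "\<forall>t\<in>{0..1}. \<exists>U. open U \<and> t \<in> U \<and> eventually (?P U) (at y within Sbar n)"
    by (intro ballI upper_local[OF K j y M less_imp_le[OF b0(1)] bb])
  then obtain Uf where Uf: "\<forall>t\<in>{0..1}. open (Uf t) \<and> t \<in> Uf t \<and> eventually (?P (Uf t)) (at y within Sbar n)"
    by (rule exE[OF bchoice])
  have op: "\<And>t. t \<in> {0..1} \<Longrightarrow> open (Uf t)" using Uf by blast
  have cov: "{0..1::real} \<subseteq> (\<Union>t\<in>{0..1}. Uf t)" using Uf by blast
  obtain C where C: "C \<subseteq> {0..1}" "finite C" "{0..1::real} \<subseteq> (\<Union>t\<in>C. Uf t)"
    by (rule compactE_image[OF compact_Icc op cov])
  have "\<forall>t\<in>C. eventually (?P (Uf t)) (at y within Sbar n)" using C(1) Uf by blast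
  hence "eventually (\<lambda>x. \<forall>t\<in>C. ?P (Uf t) x) (at y within Sbar n)"
    by (rule eventually_ball_finite[OF C(2)])
  moreover have "eventually (\<lambda>x. x \<in> Sbar n) (at y within Sbar n)"
    by (simp add: eventually_at_filter)
  ultimately show ?thesis
  proof eventually_elim
    case (elim x)
    have "mfun J K n j x \<le> ereal b" unfolding mfun_def
    proof (rule SUP_least)
      fix s assume s: "s \<in> {ypt n x j .. ypt n x (Suc j)}"
      have "s \<in> {0..1}" using s ypt_range[OF elim(2), of j] ypt_range[OF elim(2), of "Suc j"] j by auto
      then obtain t where "t \<in> C" "s \<in> Uf t" using C(3) by blast
      thus "Ffun J K n x s \<le> ereal b" using elim s by blast
    qed
    thus ?case using b(2) by simp
  qed
qed

theorem lemma3p3: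
  fixes n :: nat and K :: "nat \<Rightarrow> real \<Rightarrow> ereal" and J :: "real \<Rightarrow> ereal" and j :: nat
  assumes "\<forall>i\<in>{1..n}. singular_kernel (K i)"
    and "n_field_function n J"
    and "j \<le> n"
  shows "continuous_on (Sbar n) (mfun J K n j)"
  unfolding continuous_on_def
proof
  fix y assume y: "y \<in> Sbar n"
  show "(mfun J K n j \<longlongrightarrow> mfun J K n j y) (at y within Sbar n)"
  proof (rule order_tendstoI)
    fix c assume "c < mfun J K n j y"
    thus "eventually (\<lambda>x. c < mfun J K n j x) (at y within Sbar n)"
      by (rule lower_ev[OF assms y])
  next
    fix c assume "mfun J K n j y < c"
    thus "eventually (\<lambda>x. mfun J K n j x < c) (at y within Sbar n)"
      by (rule upper_ev[OF assms y])
  qed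
qed

end
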